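(* Every infinite crowded Tychonoff space $X$ admits a continuous surjection onto an infinite (Tychonoff) homogeneous space of countable weight.
   Context: A space is crowded if it has no isolated points. A space $Y$ is homogeneous if for any $y,z\in Y$ there is a homeomorphism of $Y$ onto itself mapping $y$ to $z$. *)

theory Defs
  imports "HOL-Analysis.Analysis"
begin

definition tychonoff_space :: "'a topology \<Rightarrow> bool" where
  "tychonoff_space X \<longleftrightarrow> completely_regular_space X \<and> t1_space X"

definition crowded :: "'a topology \<Rightarrow> bool" where
  "crowded X \<longleftrightarrow> (\<forall>x \<in> topspace X. \<not> openin X {x})"

definition homogeneous_space :: "'a topology \<Rightarrow> bool" where
  "homogeneous_space Y \<longleftrightarrow>
     (\<forall>y \<in> topspace Y. \<forall>z \<in> topspace Y. \<exists>h. homeomorphic_map Y Y h \<and> h y = z)"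

end

theory Submission
  imports Defs
begin


lemma locally_const_continuous:
  assumes "f \<in> topspace X \<rightarrow> topspace Y"
    and "\<And>x. x \<in> topspace X \<Longrightarrow> \<exists>W. openin X W \<and> x \<in> W \<and> (\<forall>y\<in>W. f y = f x)"
  shows "continuous_map X Y f"
  unfolding continuous_map_def
proof (intro conjI allI impI)
  show "f \<in> topspace X \<rightarrow> topspace Y" using assms(1) .
  fix U assume "openin Y U"
  show "openin X {x \<in> topspace X. f x \<in> U}"
    unfolding openin_subopen[of X "{x \<in> topspace X. f x \<in> U}"]
  proof
    fix x assume x: "x \<in> {x \<in> topspace X. f x \<in> U}"
    then obtain W where W: "openin X W" "x \<in> W" "\<forall>y\<in>W. f y = f x" using assms(2) by blast
    have "W \<subseteq> topspace X" using W(1) openin_subset by blast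
    moreover have "W \<subseteq> {x \<in> topspace X. f x \<in> U}"
    proof
      fix y assume "y \<in> W"
      then have "f y = f x" using W(3) by blast
      then show "y \<in> {x \<in> topspace X. f x \<in> U}" using x \<open>y \<in> W\<close> \<open>W \<subseteq> topspace X\<close> by auto
    qed
    ultimately show "\<exists>T. openin X T \<and> x \<in> T \<and> T \<subseteq> {x \<in> topspace X. f x \<in> U}"
      using W by blast
  qed
qed

lemma tych_euclidean_sub: "tychonoff_space (subtopology (euclidean::(nat\<Rightarrow>real) topology) S)"
  unfolding tychonoff_space_def
  by (simp add: completely_regular_space_subtopology metrizable_imp_completely_regular_space
      metrizable_space_euclidean t1_space_subtopology t1_space_euclidean)

lemma second_countable_euclidean_fun: "second_countable (euclidean::(nat\<Rightarrow>real) topology)"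
proof -
  obtain B :: "(nat\<Rightarrow>real) set set" where B: "countable B" "topological_basis B"
    using ex_countable_basis by blast
  show ?thesis unfolding second_countable_def
    apply (rule exI[of _ B])
    using B topological_basis_open[OF B(2)] by (auto elim!: topological_basisE[OF B(2)])
qed

lemma second_countable_euclidean_sub: "second_countable (subtopology (euclidean::(nat\<Rightarrow>real) topology) S)"
  by (simp add: second_countable_euclidean_fun second_countable_subtopology)

lemma tych_discrete: "tychonoff_space (discrete_topology U)"
  unfolding tychonoff_space_def t1_space_closedin_singleton
  by (simp add: completely_regular_space_discrete_topology)

lemma homogeneous_discrete: "homogeneous_space (discrete_topology U)"
  unfolding homogeneous_space_def
proof (intro ballI)
  fix y z assume yz: "y \<in> topspace (discrete_topology U)" "z \<in> topspace (discrete_topology U)"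
  define h where "h w = (if w = y then z else if w = z then y else w)" for w
  have "homeomorphic_maps (discrete_topology U) (discrete_topology U) h h"
    unfolding homeomorphic_maps_def using yz by (auto simp: h_def)
  then show "\<exists>h. homeomorphic_map (discrete_topology U) (discrete_topology U) h \<and> h y = z"
    using homeomorphic_map_maps by (metis h_def)
qed



lemma caseB:
  fixes X :: "'a topology"
  assumes noint: "\<And>g a b. continuous_map X euclideanreal g \<Longrightarrow> a < b \<Longrightarrow> \<exists>c. a < c \<and> c < b \<and> c \<notin> g ` topspace X"
    and g: "continuous_map X euclideanreal g" and unb: "\<not> bdd_above (g ` topspace X)"
  shows "\<exists>(Y :: (nat \<Rightarrow> real) topology) f.
           infinite (topspace Y) \<and> tychonoff_space Y \<and> homogeneous_space Y \<and>
           second_countable Y \<and>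
           continuous_map X Y f \<and> f ` topspace X = topspace Y"
proof -
  define S where "S = g ` topspace X"
  have ne: "S \<noteq> {}" using unb unfolding S_def by auto
  have up: "\<exists>y\<in>S. y > t" for t
    using unb unfolding S_def bdd_above_def by (meson linorder_not_le)
  define s where "s = rec_nat (SOME y. y \<in> S) (\<lambda>k r. SOME y. y \<in> S \<and> y > r + 1)"
  have s0: "s 0 \<in> S" unfolding s_def using ne by (simp add: some_in_eq)
  have sS: "s (Suc k) \<in> S \<and> s (Suc k) > s k + 1" for k
  proof -
    have "\<exists>y. y \<in> S \<and> y > s k + 1" using up by blast
    from someI_ex[OF this] show ?thesis unfolding s_def by simp
  qed
  have sin: "s k \<in> S" for k by (cases k) (use s0 sS in auto)
  define c where "c k = (SOME c. s k < c \<and> c < s (Suc k) \<and> c \<notin> S)" for k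
  have c: "s k < c k \<and> c k < s (Suc k) \<and> c k \<notin> S" for k
  proof -
    have "\<exists>c. s k < c \<and> c < s (Suc k) \<and> c \<notin> S"
      using noint[OF g, of "s k" "s (Suc k)"] sS[of k] unfolding S_def by auto
    then show ?thesis unfolding c_def by (rule someI_ex)
  qed
  have smono: "strict_mono s"
  proof (rule strict_mono_Suc_iff[THEN iffD2], intro allI)
    fix n show "s n < s (Suc n)" using sS[of n] by linarith
  qed
  have cmono: "strict_mono c"
  proof (rule strict_mono_Suc_iff[THEN iffD2], intro allI)
    fix n show "c n < c (Suc n)" using c[of n] c[of "Suc n"] by linarith
  qed
  have sk: "s k \<ge> s 0 + k" for k
  proof (induction k)
    case (Suc k) then show ?case using sS[of k] by simp
  qed simp
  have cbig: "c k > s 0 + k" for k using c[of k] sk[of k] by simp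
  have hex: "\<exists>n. t < c n" for t
  proof -
    obtain n::nat where "t - s 0 \<le> n" using real_arch_simple by blast
    then show ?thesis using cbig[of n] by (intro exI[of _ n]) simp
  qed
  define h where "h x = (LEAST n. g x < c n)" for x
  have h1: "g x < c (h x)" for x unfolding h_def using hex by (rule LeastI_ex)
  have h2: "c m < g x" if "x \<in> topspace X" "m < h x" for x m
  proof -
    have "\<not> g x < c m" using not_less_Least that(2) unfolding h_def by blast
    moreover have "c m \<noteq> g x" using c[of m] that(1) unfolding S_def by auto
    ultimately show ?thesis by simp
  qed
  have hchar: "h y = n" if "g y < c n" "\<And>m. m < n \<Longrightarrow> c m < g y" for y n
    unfolding h_def
  proof (rule Least_equality)
    show "g y < c n" by fact
    fix m assume m: "g y < c m"
    show "n \<le> m"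
    proof (rule ccontr)
      assume "\<not> n \<le> m"
      then have "c m < g y" using that(2) by simp
      with m show False by simp
    qed
  qed
  define I where "I n = (if n = 0 then {..<c 0} else {c (n-1)<..<c n})" for n
  have Iopen: "open (I n)" for n by (simp add: I_def)
  have hlocal: "\<exists>W. openin X W \<and> x \<in> W \<and> (\<forall>y\<in>W. h y = h x)" if x: "x \<in> topspace X" for x
  proof (intro exI conjI ballI)
    let ?W = "{y \<in> topspace X. g y \<in> I (h x)}"
    show "openin X ?W" using openin_continuous_map_preimage[OF g] Iopen by simp
    show "x \<in> ?W" using x h1[of x] h2[OF x, of "h x - 1"] by (auto simp: I_def)
    fix y assume y: "y \<in> ?W"
    show "h y = h x"
    proof (rule hchar)
      show "g y < c (h x)" using y by (auto simp: I_def split: if_splits)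
      fix m assume m: "m < h x"
      then have "c m \<le> c (h x - 1)" using cmono by (simp add: strict_mono_less_eq)
      moreover have "c (h x - 1) < g y" using y m by (auto simp: I_def split: if_splits)
      ultimately show "c m < g y" by simp
    qed
  qed
  have hsurj: "\<exists>x\<in>topspace X. h x = k" for k
  proof -
    obtain x where x: "x \<in> topspace X" "g x = s k" using sin[of k] unfolding S_def by auto
    have "h x = k"
    proof (rule hchar)
      show "g x < c k" using x c[of k] by simp
      fix m assume "m < k"
      then have "s (Suc m) \<le> s k" using smono by (simp add: strict_mono_less_eq)
      then show "c m < g x" using c[of m] x by simp
    qed
    then show ?thesis using x by blast
  qed
  define E where "E n = (\<lambda>i::nat. real n)" for n
  define Y where "Y = discrete_topology (range E)"
  define f where "f x = E (h x)" for x
  have injE: "inj E" unfolding inj_def E_def by (metis of_nat_eq_iff)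
  show ?thesis
  proof (intro exI conjI)
    show "infinite (topspace Y)" unfolding Y_def using injE by (simp add: range_inj_infinite)
    show "tychonoff_space Y" unfolding Y_def by (rule tych_discrete)
    show "homogeneous_space Y" unfolding Y_def by (rule homogeneous_discrete)
    show "second_countable Y" unfolding Y_def by (simp add: second_countable_discrete_topology)
    show "continuous_map X Y f"
    proof (rule locally_const_continuous)
      show "f \<in> topspace X \<rightarrow> topspace Y" by (auto simp: Y_def f_def)
      fix x assume "x \<in> topspace X"
      then obtain W where "openin X W" "x \<in> W" "\<forall>y\<in>W. h y = h x" using hlocal by blast
      then show "\<exists>W. openin X W \<and> x \<in> W \<and> (\<forall>y\<in>W. f y = f x)" unfolding f_def by metis
    qed
    show "f ` topspace X = topspace Y"
    proof
      show "f ` topspace X \<subseteq> topspace Y" unfolding Y_def f_def by auto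
      show "topspace Y \<subseteq> f ` topspace X"
      proof
        fix y assume "y \<in> topspace Y"
        then obtain k where k: "y = E k" unfolding Y_def by auto
        obtain x where "x \<in> topspace X" "h x = k" using hsurj by blast
        then show "y \<in> f ` topspace X" unfolding f_def k by blast
      qed
    qed
  qed
qed



lemma cm_fun_iff: "continuous_map X (euclidean::(nat\<Rightarrow>real) topology) F \<longleftrightarrow> (\<forall>k. continuous_map X euclideanreal (\<lambda>x. F x k))"
  by (metis euclidean_product_topology continuous_map_componentwise_UNIV)

lemma cm_cos: "continuous_map X euclideanreal h \<Longrightarrow> continuous_map X euclideanreal (\<lambda>x. cos (h x))"
proof -
  assume h: "continuous_map X euclideanreal h"
  have "continuous_map euclideanreal euclideanreal cos" by (simp add: continuous_on_cos continuous_on_id)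
  from continuous_map_compose[OF h this] show ?thesis by (simp add: o_def)
qed

lemma cm_sin: "continuous_map X euclideanreal h \<Longrightarrow> continuous_map X euclideanreal (\<lambda>x. sin (h x))"
proof -
  assume h: "continuous_map X euclideanreal h"
  have "continuous_map euclideanreal euclideanreal sin" by (simp add: continuous_on_sin continuous_on_id)
  from continuous_map_compose[OF h this] show ?thesis by (simp add: o_def)
qed

definition Ecirc :: "real \<Rightarrow> nat \<Rightarrow> real" where
  "Ecirc t = (\<lambda>i. if i = 0 then cos t else if i = 1 then sin t else 0)"

definition Rot :: "real \<Rightarrow> (nat \<Rightarrow> real) \<Rightarrow> nat \<Rightarrow> real" where
  "Rot a p = (\<lambda>i. if i = 0 then cos a * p 0 - sin a * p 1 else if i = 1 then sin a * p 0 + cos a * p 1 else p i)"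

lemma Rot_Ecirc: "Rot a (Ecirc t) = Ecirc (t + a)"
  by (rule ext) (simp add: Rot_def Ecirc_def cos_add sin_add algebra_simps)

lemma Rot_cont: "continuous_map euclidean (euclidean::(nat\<Rightarrow>real) topology) (Rot a)"
  unfolding cm_fun_iff
proof
  fix k :: nat
  have p: "continuous_map euclidean euclideanreal (\<lambda>p::nat\<Rightarrow>real. p j)" for j
    using cm_fun_iff[of euclidean "\<lambda>p. p"] by simp
  consider "k = 0" | "k = 1" | "k \<noteq> 0 \<and> k \<noteq> 1" by blast
  then show "continuous_map euclidean euclideanreal (\<lambda>x. Rot a x k)"
  proof cases
    case 1
    then have "(\<lambda>x. Rot a x k) = (\<lambda>x. cos a * x 0 - sin a * x 1)" by (simp add: Rot_def)
    then show ?thesis by (simp only:) (intro continuous_intros p)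
  next
    case 2
    then have "(\<lambda>x. Rot a x k) = (\<lambda>x. sin a * x 0 + cos a * x 1)" by (simp add: Rot_def)
    then show ?thesis by (simp only:) (intro continuous_intros p)
  next
    case 3
    then have "(\<lambda>x. Rot a x k) = (\<lambda>x. x k)" by (simp add: Rot_def)
    then show ?thesis by (simp only:) (intro continuous_intros p)
  qed
qed

lemma homogeneous_circle: "homogeneous_space (subtopology euclidean (range Ecirc))"
  unfolding homogeneous_space_def
proof (intro ballI)
  fix y z assume "y \<in> topspace (subtopology euclidean (range Ecirc))" "z \<in> topspace (subtopology euclidean (range Ecirc))"
  then obtain s t where st: "y = Ecirc s" "z = Ecirc t" by auto
  have rc: "continuous_map (subtopology euclidean (range Ecirc)) (subtopology euclidean (range Ecirc)) (Rot \<alpha>)" for \<alpha>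
    unfolding continuous_map_in_subtopology
    by (intro conjI continuous_map_from_subtopology Rot_cont) (auto simp: Rot_Ecirc)
  have "homeomorphic_maps (subtopology euclidean (range Ecirc)) (subtopology euclidean (range Ecirc)) (Rot (t - s)) (Rot (-(t-s)))"
    unfolding homeomorphic_maps_def
    by (intro conjI rc) (auto simp: Rot_Ecirc)
  moreover have "Rot (t - s) y = z" using st by (simp add: Rot_Ecirc)
  ultimately show "\<exists>h. homeomorphic_map (subtopology euclidean (range Ecirc)) (subtopology euclidean (range Ecirc)) h \<and> h y = z"
    using homeomorphic_map_maps by blast
qed

lemma infinite_circle: "infinite (range Ecirc)"
proof
  assume "finite (range Ecirc)"
  then have "finite ((\<lambda>p. p 0) ` range Ecirc)" by simp
  moreover have "{-1..1::real} \<subseteq> (\<lambda>p. p 0) ` range Ecirc"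
  proof
    fix y :: real assume "y \<in> {-1..1}"
    then have "y = Ecirc (arccos y) 0" by (simp add: Ecirc_def)
    then show "y \<in> (\<lambda>p. p 0) ` range Ecirc" by blast
  qed
  moreover have "\<not> finite {-1..1::real}" by (rule infinite_Icc) simp
  ultimately show False using finite_subset by blast
qed

lemma caseA:
  fixes X :: "'a topology"
  assumes g: "continuous_map X euclideanreal g" and ab: "a < b" and sub: "{a..b} \<subseteq> g ` topspace X"
  shows "\<exists>(Y :: (nat \<Rightarrow> real) topology) f.
           infinite (topspace Y) \<and> tychonoff_space Y \<and> homogeneous_space Y \<and>
           second_countable Y \<and>
           continuous_map X Y f \<and> f ` topspace X = topspace Y"
proof -
  define c where "c = 2 * pi / (b - a)"
  have cpos: "c > 0" using ab by (simp add: c_def)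
  define f where "f x = Ecirc (c * g x)" for x
  have cg: "continuous_map X euclideanreal (\<lambda>x. c * g x)"
    using g by (intro continuous_intros)
  have fcont: "continuous_map X euclidean f"
    unfolding cm_fun_iff
  proof
    fix k
    show "continuous_map X euclideanreal (\<lambda>x. f x k)"
      unfolding f_def Ecirc_def using cm_cos[OF cg] cm_sin[OF cg] by auto
  qed
  have surj: "Ecirc t \<in> f ` topspace X" for t
  proof -
    have "(cos (t - c*a))\<^sup>2 + (sin (t - c*a))\<^sup>2 = 1" by simp
    then obtain \<theta> where th: "0 \<le> \<theta>" "\<theta> < 2*pi" "cos (t - c*a) = cos \<theta>" "sin (t - c*a) = sin \<theta>"
      by (rule sincos_total_2pi) blast
    have "Ecirc (c*a + \<theta>) = Ecirc t"
    proof -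
      have "cos (c*a + \<theta>) = cos (c*a + (t - c*a))" "sin (c*a + \<theta>) = sin (c*a + (t - c*a))"
        by (simp_all only: cos_add sin_add th)
      then show ?thesis unfolding Ecirc_def by (intro ext) simp
    qed
    moreover have "a + \<theta> / c \<in> {a..b}"
    proof -
      have "\<theta> / c < 2 * pi / c" using th cpos by (simp add: divide_strict_right_mono)
      also have "2 * pi / c = b - a" using ab by (simp add: c_def)
      finally show ?thesis using th cpos by simp
    qed
    then have "a + \<theta> / c \<in> g ` topspace X" using sub by blast
    then obtain x where x: "x \<in> topspace X" "g x = a + \<theta> / c" by (metis imageE)
    have "f x = Ecirc (c*a + \<theta>)" using x cpos by (simp add: f_def algebra_simps)
    ultimately show ?thesis using x by force
  qed
  show ?thesis
  proof (intro exI conjI)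
    show "infinite (topspace (subtopology euclidean (range Ecirc)))" using infinite_circle by simp
    show "tychonoff_space (subtopology euclidean (range Ecirc))" by (rule tych_euclidean_sub)
    show "homogeneous_space (subtopology euclidean (range Ecirc))" by (rule homogeneous_circle)
    show "second_countable (subtopology euclidean (range Ecirc))" by (rule second_countable_euclidean_sub)
    show "continuous_map X (subtopology euclidean (range Ecirc)) f"
      using fcont by (auto simp: continuous_map_in_subtopology f_def)
    show "f ` topspace X = topspace (subtopology euclidean (range Ecirc))"
      using surj by (auto simp: f_def)
  qed
qed



definition spl :: "'a topology \<Rightarrow> 'a set \<Rightarrow> 'a set" where
  "spl X A = (SOME B. openin X B \<and> closedin X B \<and> B \<subseteq> A \<and> B \<noteq> {} \<and> A - B \<noteq> {})"

fun Cs :: "'a topology \<Rightarrow> bool list \<Rightarrow> 'a set" where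
  "Cs X [] = topspace X"
| "Cs X (b # s) = (if b then spl X (Cs X s) else Cs X s - spl X (Cs X s))"

fun pth :: "'a topology \<Rightarrow> 'a \<Rightarrow> nat \<Rightarrow> bool list" where
  "pth X x 0 = []"
| "pth X x (Suc n) = (x \<in> spl X (Cs X (pth X x n))) # pth X x n"

fun bl :: "(nat \<Rightarrow> real) \<Rightarrow> nat \<Rightarrow> bool list" where
  "bl b 0 = []"
| "bl b (Suc n) = (b n = 1) # bl b n"

definition Fm :: "'a topology \<Rightarrow> 'a \<Rightarrow> nat \<Rightarrow> real" where
  "Fm X x = (\<lambda>n. if x \<in> spl X (Cs X (pth X x n)) then 1 else 0)"

definition clopen_split :: "'a topology \<Rightarrow> bool" where
  "clopen_split X \<longleftrightarrow> (\<forall>A. openin X A \<and> closedin X A \<and> A \<noteq> {} \<longrightarrow>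
      (\<exists>B. openin X B \<and> closedin X B \<and> B \<subseteq> A \<and> B \<noteq> {} \<and> A - B \<noteq> {}))"

lemma spl_props:
  assumes "clopen_split X" "openin X A" "closedin X A" "A \<noteq> {}"
  shows "openin X (spl X A) \<and> closedin X (spl X A) \<and> spl X A \<subseteq> A \<and> spl X A \<noteq> {} \<and> A - spl X A \<noteq> {}"
proof -
  have "\<exists>B. openin X B \<and> closedin X B \<and> B \<subseteq> A \<and> B \<noteq> {} \<and> A - B \<noteq> {}"
    using assms unfolding clopen_split_def by blast
  then show ?thesis unfolding spl_def by (rule someI_ex)
qed

lemma Cs_props:
  assumes sp: "clopen_split X" and ne: "topspace X \<noteq> {}"
  shows "openin X (Cs X s) \<and> closedin X (Cs X s) \<and> Cs X s \<noteq> {}"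
proof (induction s)
  case Nil then show ?case using ne by simp
next
  case (Cons b s)
  then have P: "openin X (spl X (Cs X s)) \<and> closedin X (spl X (Cs X s)) \<and> spl X (Cs X s) \<subseteq> Cs X s
      \<and> spl X (Cs X s) \<noteq> {} \<and> Cs X s - spl X (Cs X s) \<noteq> {}"
    using spl_props[OF sp] by blast
  show ?case
  proof (cases b)
    case True then show ?thesis using P by simp
  next
    case False then show ?thesis using P Cons.IH by (auto intro: openin_diff closedin_diff)
  qed
qed

lemma Cs_mono:
  assumes sp: "clopen_split X" and ne: "topspace X \<noteq> {}"
  shows "Cs X (b # s) \<subseteq> Cs X s"
  using spl_props[OF sp] Cs_props[OF sp ne, of s] by auto

lemma pth_mem: "x \<in> topspace X \<Longrightarrow> x \<in> Cs X (pth X x n)"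
  by (induction n) auto

lemma length_pth [simp]: "length (pth X x n) = n"
  by (induction n) auto

lemma length_bl [simp]: "length (bl b n) = n"
  by (induction n) auto

lemma pth_Cs:
  assumes sp: "clopen_split X" and ne: "topspace X \<noteq> {}"
  shows "x \<in> Cs X s \<Longrightarrow> pth X x (length s) = s"
proof (induction s)
  case Nil then show ?case by simp
next
  case (Cons b s)
  then have xs: "x \<in> Cs X s" using Cs_mono[OF sp ne] by blast
  then have IH: "pth X x (length s) = s" using Cons.IH by blast
  have "b = (x \<in> spl X (Cs X s))" using Cons.prems by (cases b) auto
  then show ?case using IH by simp
qed

lemma Fm_cont:
  assumes sp: "clopen_split X" and ne: "topspace X \<noteq> {}"
  shows "continuous_map X euclideanreal (\<lambda>x. Fm X x n)"
proof (rule locally_const_continuous)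
  show "(\<lambda>x. Fm X x n) \<in> topspace X \<rightarrow> topspace euclideanreal" by simp
  fix x assume x: "x \<in> topspace X"
  show "\<exists>W. openin X W \<and> x \<in> W \<and> (\<forall>y\<in>W. Fm X y n = Fm X x n)"
  proof (intro exI conjI ballI)
    show "openin X (Cs X (pth X x (Suc n)))" using Cs_props[OF sp ne] by blast
    show "x \<in> Cs X (pth X x (Suc n))" using pth_mem[OF x] .
    fix y assume "y \<in> Cs X (pth X x (Suc n))"
    from pth_Cs[OF sp ne this] have "pth X y (Suc n) = pth X x (Suc n)" by (simp only: length_pth)
    then have "(y \<in> spl X (Cs X (pth X y n))) = (x \<in> spl X (Cs X (pth X x n)))"
      by (metis list.inject pth.simps(2))
    then show "Fm X y n = Fm X x n" unfolding Fm_def by simp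
  qed
qed

lemma Cs_bl_mono:
  assumes sp: "clopen_split X" and ne: "topspace X \<noteq> {}"
  shows "n \<le> N \<Longrightarrow> Cs X (bl b N) \<subseteq> Cs X (bl b n)"
proof (induction N)
  case 0 then show ?case by simp
next
  case (Suc N)
  show ?case
  proof (cases "n = Suc N")
    case False
    then have "n \<le> N" using Suc.prems by simp
    then show ?thesis using Suc.IH Cs_mono[OF sp ne, of "b N = 1" "bl b N"] by simp
  qed simp
qed

lemma Fm_dense:
  assumes sp: "clopen_split X" and ne: "topspace X \<noteq> {}"
    and b: "\<forall>i. b i = 0 \<or> b i = 1"
  shows "\<exists>x\<in>topspace X. \<forall>n<N. Fm X x n = b n"
proof -
  obtain x where x: "x \<in> Cs X (bl b N)" using Cs_props[OF sp ne, of "bl b N"] by blast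
  have xt: "x \<in> topspace X" using Cs_props[OF sp ne, of "bl b N"] x openin_subset by blast
  have "Fm X x n = b n" if n: "n < N" for n
  proof -
    have "x \<in> Cs X (bl b (Suc n))" using Cs_bl_mono[OF sp ne, of "Suc n" N b] n x by auto
    from pth_Cs[OF sp ne this] have "pth X x (Suc n) = bl b (Suc n)" by (simp only: length_bl)
    then have "(x \<in> spl X (Cs X (pth X x n))) = (b n = 1)" unfolding pth.simps bl.simps list.inject by (metis (full_types))
    then show ?thesis using b[rule_format, of n] by (auto simp: Fm_def)
  qed
  then show ?thesis using xt by blast
qed



lemma zerodim:
  assumes creg: "completely_regular_space X"
    and noint: "\<And>g a b. continuous_map X euclideanreal g \<Longrightarrow> a < b \<Longrightarrow> \<exists>c. a < c \<and> c < b \<and> c \<notin> g ` topspace X"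
    and U: "openin X U" "x \<in> U"
  shows "\<exists>V. openin X V \<and> closedin X V \<and> x \<in> V \<and> V \<subseteq> U"
proof -
  have c1: "closedin X (topspace X - U)" using U by (simp add: closedin_diff)
  have c2: "x \<in> topspace X - (topspace X - U)" using U openin_subset by blast
  have "\<exists>f::'a\<Rightarrow>real. continuous_map X (top_of_set {0..1}) f \<and> f x = 0 \<and> f ` (topspace X - U) \<subseteq> {1}"
    using creg[unfolded completely_regular_space_def, rule_format, OF conjI[OF c1 c2]] .
  then obtain h :: "'a \<Rightarrow> real" where hh: "continuous_map X (top_of_set {0..1}) h \<and> h x = 0 \<and> h ` (topspace X - U) \<subseteq> {1}" ..
  then have h: "continuous_map X (top_of_set {0..1}) h" "h x = 0" "h ` (topspace X - U) \<subseteq> {1}" by simp_all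
  have hc: "continuous_map X euclideanreal h" using continuous_map_into_fulltopology h(1) by blast
  obtain c where c: "0 < c" "c < 1" "c \<notin> h ` topspace X" using noint[OF hc, of 0 1] by auto
  define V where "V = {y \<in> topspace X. h y \<in> {..<c}}"
  have "V = {y \<in> topspace X. h y \<in> {..c}}" unfolding V_def using c(3) by force
  then have "closedin X V" using closedin_continuous_map_preimage[OF hc, of "{..c}"] by simp
  moreover have "openin X V" unfolding V_def using openin_continuous_map_preimage[OF hc, of "{..<c}"] by simp
  moreover have "x \<in> V" unfolding V_def using U openin_subset h(2) c(1) by auto
  moreover have "V \<subseteq> U"
  proof
    fix y assume y: "y \<in> V"
    show "y \<in> U"
    proof (rule ccontr)
      assume "y \<notin> U"
      then have "h y = 1" using h(3) y unfolding V_def by auto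
      then show False using y c(2) unfolding V_def by auto
    qed
  qed
  ultimately show ?thesis by blast
qed

lemma clopen_split_I:
  assumes cr: "crowded X" and t1: "t1_space X"
    and zd: "\<And>U x. openin X U \<Longrightarrow> x \<in> U \<Longrightarrow> \<exists>V. openin X V \<and> closedin X V \<and> x \<in> V \<and> V \<subseteq> U"
  shows "clopen_split X"
  unfolding clopen_split_def
proof (intro allI impI)
  fix A assume A: "openin X A \<and> closedin X A \<and> A \<noteq> {}"
  then obtain x where x: "x \<in> A" by blast
  have At: "A \<subseteq> topspace X" using A openin_subset by blast
  have "A \<noteq> {x}" using cr A x At unfolding crowded_def by auto
  then obtain y where y: "y \<in> A" "y \<noteq> x" using x by blast
  have "closedin X {y}" using t1 y At unfolding t1_space_closedin_singleton by blast
  then have "openin X (topspace X - {y})" by (simp add: openin_diff)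
  moreover have "x \<in> topspace X - {y}" using x y At by auto
  ultimately obtain V where V: "openin X V" "closedin X V" "x \<in> V" "V \<subseteq> topspace X - {y}"
    using zd by blast
  show "\<exists>B. openin X B \<and> closedin X B \<and> B \<subseteq> A \<and> B \<noteq> {} \<and> A - B \<noteq> {}"
    using A V x y by (intro exI[of _ "A \<inter> V"]) auto
qed

definition Kc :: "(nat \<Rightarrow> real) set" where "Kc = {p. \<forall>i. p i = 0 \<or> p i = 1}"

definition Tx :: "(nat \<Rightarrow> real) \<Rightarrow> (nat \<Rightarrow> real) \<Rightarrow> nat \<Rightarrow> real" where
  "Tx c p = (\<lambda>i. \<bar>p i - c i\<bar>)"

lemma Tx_cont: "continuous_map euclidean (euclidean::(nat\<Rightarrow>real) topology) (Tx c)"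
  unfolding cm_fun_iff
proof
  fix k :: nat
  have p: "continuous_map euclidean euclideanreal (\<lambda>p::nat\<Rightarrow>real. p j)" for j
    using cm_fun_iff[of euclidean "\<lambda>p. p"] by simp
  show "continuous_map euclidean euclideanreal (\<lambda>x. Tx c x k)"
    unfolding Tx_def by (intro continuous_intros p)
qed

lemma Tx_K: "c \<in> Kc \<Longrightarrow> p \<in> Kc \<Longrightarrow> Tx c p \<in> Kc"
  unfolding Kc_def Tx_def by (auto) (metis abs_zero abs_minus_commute diff_self diff_zero abs_one)

lemma Tx_inv: "c \<in> Kc \<Longrightarrow> p \<in> Kc \<Longrightarrow> Tx c (Tx c p) = p"
  unfolding Kc_def Tx_def
proof (rule ext)
  fix i assume "c \<in> {p. \<forall>i. p i = 0 \<or> p i = 1}" "p \<in> {p. \<forall>i. p i = 0 \<or> p i = 1}"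
  then have "c i = 0 \<or> c i = 1" "p i = 0 \<or> p i = 1" by auto
  then show "\<bar>\<bar>p i - c i\<bar> - c i\<bar> = p i" by auto
qed

lemma homogeneous_K: "homogeneous_space (subtopology euclidean Kc)"
  unfolding homogeneous_space_def
proof (intro ballI)
  fix y z assume "y \<in> topspace (subtopology euclidean Kc)" "z \<in> topspace (subtopology euclidean Kc)"
  then have yz: "y \<in> Kc" "z \<in> Kc" by auto
  define c where "c = Tx z y"
  have cK: "c \<in> Kc" using Tx_K yz by (simp add: c_def)
  have tc: "continuous_map (subtopology euclidean Kc) (subtopology euclidean Kc) (Tx c)"
    unfolding continuous_map_in_subtopology
    by (intro conjI continuous_map_from_subtopology Tx_cont) (auto simp: Tx_K cK)
  have "homeomorphic_maps (subtopology euclidean Kc) (subtopology euclidean Kc) (Tx c) (Tx c)"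
    unfolding homeomorphic_maps_def by (intro conjI tc) (auto simp: Tx_inv cK)
  moreover have "Tx c y = z"
  proof (rule ext)
    fix i
    have "y i = 0 \<or> y i = 1" "z i = 0 \<or> z i = 1" using yz by (auto simp: Kc_def)
    then show "Tx c y i = z i" by (auto simp: c_def Tx_def)
  qed
  ultimately show "\<exists>h. homeomorphic_map (subtopology euclidean Kc) (subtopology euclidean Kc) h \<and> h y = z"
    using homeomorphic_map_maps by blast
qed

lemma infinite_K: "infinite Kc"
proof -
  define e where "e k = (\<lambda>i::nat. if i = k then 1 else 0::real)" for k
  have "inj e" unfolding inj_def e_def by (metis zero_neq_one)
  then have "infinite (range e)" by (rule range_inj_infinite)
  moreover have "range e \<subseteq> Kc" by (auto simp: e_def Kc_def)
  ultimately show ?thesis using infinite_super by blast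
qed



lemma caseC:
  fixes X :: "'a topology"
  assumes sp: "clopen_split X" and ne: "topspace X \<noteq> {}"
    and bdd: "\<And>g. continuous_map X euclideanreal g \<Longrightarrow> bdd_above (g ` topspace X)"
  shows "\<exists>(Y :: (nat \<Rightarrow> real) topology) f.
           infinite (topspace Y) \<and> tychonoff_space Y \<and> homogeneous_space Y \<and>
           second_countable Y \<and>
           continuous_map X Y f \<and> f ` topspace X = topspace Y"
proof -
  define F where "F = Fm X"
  have Fcont: "continuous_map X euclidean F"
    unfolding cm_fun_iff F_def using Fm_cont[OF sp ne] by blast
  have FK: "F x \<in> Kc" for x by (simp add: F_def Fm_def Kc_def)
  have surj: "b \<in> F ` topspace X" if b: "b \<in> Kc" for b
  proof (rule ccontr)
    assume nb: "b \<notin> F ` topspace X"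
    define d where "d x = dist (F x) b" for x
    have "continuous_map euclidean euclideanreal (\<lambda>p::nat\<Rightarrow>real. dist p b)"
      by (simp add: continuous_on_dist continuous_on_id continuous_on_const)
    from continuous_map_compose[OF Fcont this]
    have dc0: "continuous_map X euclideanreal ((\<lambda>p. dist p b) \<circ> F)" .
    have deq: "d = (\<lambda>p. dist p b) \<circ> F" by (simp add: d_def fun_eq_iff)
    have dc: "continuous_map X euclideanreal d" unfolding deq by (rule dc0)
    have dpos: "d x > 0" if "x \<in> topspace X" for x
      using nb that by (auto simp: d_def)
    have ic: "continuous_map X euclideanreal (\<lambda>x. inverse (d x))"
      using dc dpos by (intro continuous_map_real_inverse) (auto simp: less_le)
    obtain M where M: "\<And>x. x \<in> topspace X \<Longrightarrow> inverse (d x) \<le> M"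
      using bdd[OF ic] unfolding bdd_above_def by blast
    obtain x0 where x0: "x0 \<in> topspace X" using ne by blast
    have Mpos: "M > 0" using M[OF x0] dpos[OF x0] by (meson inverse_positive_iff_positive less_le_trans)
    obtain N where N: "(1/2::real)^N < inverse (M+1)"
      using real_arch_pow_inv[of "inverse (M+1)" "1/2"] Mpos by auto
    define L where "L = Suc (Max ((from_nat :: nat \<Rightarrow> nat) ` {..N}))"
    have fl: "(from_nat n :: nat) < L" if "n \<le> N" for n
    proof -
      have "(from_nat n :: nat) \<le> Max ((from_nat :: nat \<Rightarrow> nat) ` {..N})"
        using that by (intro Max_ge) auto
      then show ?thesis unfolding L_def by simp
    qed
    have bb: "\<forall>i. b i = 0 \<or> b i = 1" using b by (simp add: Kc_def)
    obtain x where x: "x \<in> topspace X" "\<forall>n<L. Fm X x n = b n"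
      using Fm_dense[OF sp ne bb, of L] by blast
    have set0: "{dist (F x (from_nat n)) (b (from_nat n)) |n. n \<le> N} = {0}"
    proof -
      have "dist (F x (from_nat n)) (b (from_nat n)) = 0" if "n \<le> N" for n
        using x(2) fl[OF that] by (simp add: F_def)
      then show ?thesis by auto (use le0 in blast)
    qed
    have "d x \<le> 2 * Max {dist (F x (from_nat n)) (b (from_nat n)) |n. n \<le> N} + (1/2)^N"
      unfolding d_def by (rule dist_fun_le_dist_first_terms)
    then have "d x < inverse (M + 1)" using N set0 by simp
    then have "inverse (inverse (M+1)) < inverse (d x)"
      by (rule less_imp_inverse_less) (rule dpos[OF x(1)])
    then have "M + 1 < inverse (d x)" using Mpos by simp
    then show False using M[OF x(1)] by simp
  qed
  show ?thesis
  proof (intro exI conjI)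
    show "infinite (topspace (subtopology euclidean Kc))" using infinite_K by simp
    show "tychonoff_space (subtopology euclidean Kc)" by (rule tych_euclidean_sub)
    show "homogeneous_space (subtopology euclidean Kc)" by (rule homogeneous_K)
    show "second_countable (subtopology euclidean Kc)" by (rule second_countable_euclidean_sub)
    show "continuous_map X (subtopology euclidean Kc) F"
      using Fcont FK by (auto simp: continuous_map_in_subtopology)
    show "F ` topspace X = topspace (subtopology euclidean Kc)"
      using surj FK by auto
  qed
qed

theorem mainTheorem2:
  fixes X :: "'a topology"
  assumes "infinite (topspace X)" and "crowded X" and "tychonoff_space X"
  shows "\<exists>(Y :: (nat \<Rightarrow> real) topology) f.
           infinite (topspace Y) \<and> tychonoff_space Y \<and> homogeneous_space Y \<and>
           second_countable Y \<and>
           continuous_map X Y f \<and> f ` topspace X = topspace Y"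
proof -
  have ne: "topspace X \<noteq> {}" using assms(1) by auto
  have creg: "completely_regular_space X" and t1: "t1_space X"
    using assms(3) by (auto simp: tychonoff_space_def)
  show ?thesis
  proof (cases "\<exists>g a b. continuous_map X euclideanreal g \<and> a < b \<and> {a..b} \<subseteq> g ` topspace X")
    case True
    then obtain g a b where "continuous_map X euclideanreal g" "a < b" "{a..b} \<subseteq> g ` topspace X" by blast
    then show ?thesis by (rule caseA)
  next
    case False
    have noint: "\<exists>c. a < c \<and> c < b \<and> c \<notin> g ` topspace X"
      if g: "continuous_map X euclideanreal g" and ab: "a < b" for g a b
    proof -
      have a': "a + (b-a)/3 < b - (b-a)/3" using ab by (simp add: field_simps)
      have "\<not> {a + (b-a)/3 .. b - (b-a)/3} \<subseteq> g ` topspace X"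
        using False g a' by blast
      then obtain c where c: "c \<in> {a + (b-a)/3 .. b - (b-a)/3}" "c \<notin> g ` topspace X" by blast
      from c(1) have "a + (b-a)/3 \<le> c" "c \<le> b - (b-a)/3" by auto
      then have "a < c" using ab by (simp add: field_simps)
      have "c < b" using ab \<open>c \<le> b - (b-a)/3\<close> by (simp add: field_simps)
      then show ?thesis using c(2) \<open>a < c\<close> by blast
    qed
    show ?thesis
    proof (cases "\<exists>g. continuous_map X euclideanreal g \<and> \<not> bdd_above (g ` topspace X)")
      case True
      then obtain g :: "'a \<Rightarrow> real" where gg: "continuous_map X euclideanreal g \<and> \<not> bdd_above (g ` topspace X)" ..
      then have g1: "continuous_map X euclideanreal g" and g2: "\<not> bdd_above (g ` topspace X)" by simp_all
      show ?thesis by (rule caseB[OF noint g1 g2])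
    next
      case False
      have sp: "clopen_split X"
        by (rule clopen_split_I[OF assms(2) t1]) (rule zerodim[OF creg noint])
      note nb = False
      show ?thesis
      proof (rule caseC[OF sp ne])
        fix g :: "'a \<Rightarrow> real" assume "continuous_map X euclideanreal g"
        then show "bdd_above (g ` topspace X)" using nb by metis
      qed
    qed
  qed
qed


end
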